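(* (1) Co-commensurability is an equivalence relation on pairs $(G,\alpha)$ consisting of a compact group $G$ and an automorphism $\alpha$ of $G$. (2) Two such pairs $(H_1,\alpha_1)$ and $(H_2,\alpha_2)$ are co-commensurable if and only if there is a pair $(L,\gamma)$ (a compact group with automorphism) and surjective homomorphisms $\psi_i:H_i\to L$ with finite kernels satisfying $\gamma\circ\psi_i=\psi_i\circ\alpha_i$ for $i=1,2$.
   Context: Pairs $(G_1,\alpha_1)$ and $(G_2,\alpha_2)$ are co-commensurable if there is a pair $(G,\alpha)$ (compact group with automorphism) and surjective continuous homomorphisms $\varphi_i:G\to G_i$ with finite kernels satisfying $\varphi_i\circ\alpha=\alpha_i\circ\varphi_i$ for $i=1,2$. *)

theory Defs
  imports "HOL-Analysis.Analysis" "HOL-Algebra.Algebra"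
begin

definition compact_group :: "'a monoid \<Rightarrow> 'a topology \<Rightarrow> bool" where
  "compact_group G T \<longleftrightarrow> group G \<and> topspace T = carrier G
     \<and> continuous_map (prod_topology T T) T (\<lambda>(x, y). x \<otimes>\<^bsub>G\<^esub> y)
     \<and> continuous_map T T (m_inv G)
     \<and> compact_space T \<and> Hausdorff_space T"

definition top_group_aut :: "'a monoid \<Rightarrow> 'a topology \<Rightarrow> ('a \<Rightarrow> 'a) \<Rightarrow> bool" where
  "top_group_aut G T \<alpha> \<longleftrightarrow> \<alpha> \<in> iso G G \<and> homeomorphic_map T T \<alpha>"

definition cpair :: "'a monoid \<Rightarrow> 'a topology \<Rightarrow> ('a \<Rightarrow> 'a) \<Rightarrow> bool" where
  "cpair G T \<alpha> \<longleftrightarrow> compact_group G T \<and> top_group_aut G T \<alpha>"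

definition fk_epi :: "'a monoid \<Rightarrow> 'a topology \<Rightarrow> 'b monoid \<Rightarrow> 'b topology \<Rightarrow> ('a \<Rightarrow> 'b) \<Rightarrow> bool" where
  "fk_epi G T H S \<phi> \<longleftrightarrow> \<phi> \<in> hom G H \<and> continuous_map T S \<phi>
     \<and> \<phi> ` carrier G = carrier H \<and> finite (kernel G H \<phi>)"

definition cocomm_via :: "'c itself \<Rightarrow> 'a monoid \<Rightarrow> 'a topology \<Rightarrow> ('a \<Rightarrow> 'a)
    \<Rightarrow> 'b monoid \<Rightarrow> 'b topology \<Rightarrow> ('b \<Rightarrow> 'b) \<Rightarrow> bool" where
  "cocomm_via (_::'c itself) G1 T1 \<alpha>1 G2 T2 \<alpha>2 \<longleftrightarrow>
     (\<exists>(G::'c monoid) T \<alpha> \<phi>1 \<phi>2. cpair G T \<alpha>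
        \<and> fk_epi G T G1 T1 \<phi>1 \<and> fk_epi G T G2 T2 \<phi>2
        \<and> (\<forall>x\<in>carrier G. \<phi>1 (\<alpha> x) = \<alpha>1 (\<phi>1 x))
        \<and> (\<forall>x\<in>carrier G. \<phi>2 (\<alpha> x) = \<alpha>2 (\<phi>2 x)))"

definition cocodom_via :: "'c itself \<Rightarrow> 'a monoid \<Rightarrow> 'a topology \<Rightarrow> ('a \<Rightarrow> 'a)
    \<Rightarrow> 'b monoid \<Rightarrow> 'b topology \<Rightarrow> ('b \<Rightarrow> 'b) \<Rightarrow> bool" where
  "cocodom_via (_::'c itself) H1 T1 \<alpha>1 H2 T2 \<alpha>2 \<longleftrightarrow>
     (\<exists>(L::'c monoid) S \<gamma> \<psi>1 \<psi>2. cpair L S \<gamma>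
        \<and> fk_epi H1 T1 L S \<psi>1 \<and> fk_epi H2 T2 L S \<psi>2
        \<and> (\<forall>x\<in>carrier H1. \<gamma> (\<psi>1 x) = \<psi>1 (\<alpha>1 x))
        \<and> (\<forall>x\<in>carrier H2. \<gamma> (\<psi>2 x) = \<psi>2 (\<alpha>2 x)))"

end

theory Submission
  imports Defs
begin

lemma hom_fibre_finite:
  assumes "group A" "group C" "f \<in> hom A C" "finite (kernel A C f)" "finite S"
  shows "finite {x \<in> carrier A. f x \<in> S}"
proof -
  interpret group_hom A C f using assms by (simp add: group_hom_def group_hom_axioms_def)
  have fib: "finite {x \<in> carrier A. f x = s}" for s
  proof (cases "\<exists>x0\<in>carrier A. f x0 = s")
    case False then have "{x \<in> carrier A. f x = s} = {}" by auto
    then show ?thesis by (simp only: finite.emptyI)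
  next
    case True
    then obtain x0 where x0: "x0 \<in> carrier A" "f x0 = s" by blast
    have "{x \<in> carrier A. f x = s} \<subseteq> (\<lambda>z. x0 \<otimes>\<^bsub>A\<^esub> z) ` kernel A C f"
    proof
      fix x assume x: "x \<in> {x \<in> carrier A. f x = s}"
      define z where "z = inv\<^bsub>A\<^esub> x0 \<otimes>\<^bsub>A\<^esub> x"
      have zc: "z \<in> carrier A" using x x0 by (simp add: z_def)
      have "f z = inv\<^bsub>C\<^esub> (f x0) \<otimes>\<^bsub>C\<^esub> f x" using x x0 by (simp add: z_def)
      also have "\<dots> = \<one>\<^bsub>C\<^esub>" using x x0 hom_closed[of x0] by simp
      finally have "z \<in> kernel A C f" using zc by (simp add: kernel_def)
      moreover have "x = x0 \<otimes>\<^bsub>A\<^esub> z" using x x0 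
        unfolding z_def by (simp add: G.m_assoc[symmetric])
      ultimately show "x \<in> (\<lambda>z. x0 \<otimes>\<^bsub>A\<^esub> z) ` kernel A C f" by blast
    qed
    then show ?thesis using assms(4) finite_surj by blast
  qed
  have "{x \<in> carrier A. f x \<in> S} = (\<Union>s\<in>S. {x \<in> carrier A. f x = s})" by auto
  then show ?thesis using fib assms(5) by simp
qed

lemma fk_epi_comp:
  assumes "group A" "group B" "group C"
    "fk_epi A TA B TB f" "fk_epi B TB C TC g"
  shows "fk_epi A TA C TC (g \<circ> f)"
proof -
  have hf: "f \<in> hom A B" and hg: "g \<in> hom B C" using assms(4,5) by (auto simp: fk_epi_def)
  have "kernel A C (g \<circ> f) = {x \<in> carrier A. f x \<in> kernel B C g}"
    using hf by (auto simp: kernel_def hom_def)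
  then have "finite (kernel A C (g \<circ> f))"
    using hom_fibre_finite[OF assms(1,2) hf] assms(4,5) by (simp add: fk_epi_def)
  moreover have "(g \<circ> f) \<in> hom A C" using hf hg hom_compose by blast
  moreover have "continuous_map TA TC (g \<circ> f)"
    using assms(4,5) continuous_map_compose by (auto simp: fk_epi_def)
  moreover have "(g \<circ> f) ` carrier A = carrier C"
    proof -
    have "(g \<circ> f) ` carrier A = g ` (f ` carrier A)" by (rule image_comp[symmetric])
    then show ?thesis using assms(4,5) unfolding fk_epi_def by simp
  qed
  ultimately show ?thesis by (simp add: fk_epi_def)
qed

lemma fk_epi_id:
  assumes "compact_group G T"
  shows "fk_epi G T G T (\<lambda>x. x)"
proof -
  have g: "group G" using assms by (simp add: compact_group_def)
  have o: "\<one>\<^bsub>G\<^esub> \<in> carrier G" using g by (metis group.is_monoid monoid.one_closed)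
  then have "kernel G G (\<lambda>x. x) = {\<one>\<^bsub>G\<^esub>}" by (auto simp: kernel_def)
  then show ?thesis by (simp add: fk_epi_def hom_def)
qed

lemma cont_mult_comp:
  assumes M: "continuous_map (prod_topology T T) T (\<lambda>(x,y). m x y)"
    and u: "continuous_map Z T u" and v: "continuous_map Z T v"
  shows "continuous_map Z T (\<lambda>z. m (u z) (v z))"
proof -
  have "continuous_map Z T ((\<lambda>(x,y). m x y) \<circ> (\<lambda>z. (u z, v z)))"
    by (rule continuous_map_compose[OF continuous_map_pairedI[OF u v] M])
  then show ?thesis by (simp add: o_def)
qed

lemma cpairD:
  assumes "cpair G T a"
  shows "group G" "topspace T = carrier G"
    "continuous_map (prod_topology T T) T (\<lambda>(x, y). x \<otimes>\<^bsub>G\<^esub> y)"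
    "continuous_map T T (m_inv G)" "compact_space T" "Hausdorff_space T"
    "a \<in> iso G G" "homeomorphic_map T T a"
  using assms by (auto simp: cpair_def compact_group_def top_group_aut_def)

lemma fiber_product:
  fixes A :: "'a monoid" and B :: "'b monoid" and C :: "'c monoid"
  assumes cA: "cpair A TA \<alpha>" and cB: "cpair B TB \<beta>" and cC: "cpair C TC \<gamma>"
    and f: "fk_epi A TA C TC f" and g: "fk_epi B TB C TC g"
    and fa: "\<forall>x\<in>carrier A. f (\<alpha> x) = \<gamma> (f x)" and gb: "\<forall>y\<in>carrier B. g (\<beta> y) = \<gamma> (g y)"
    and P: "P = {z \<in> carrier A \<times> carrier B. f (fst z) = g (snd z)}"
  shows "cpair ((A \<times>\<times> B)\<lparr>carrier := P\<rparr>) (subtopology (prod_topology TA TB) P) (\<lambda>z. (\<alpha> (fst z), \<beta> (snd z)))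
     \<and> fk_epi ((A \<times>\<times> B)\<lparr>carrier := P\<rparr>) (subtopology (prod_topology TA TB) P) A TA fst
     \<and> fk_epi ((A \<times>\<times> B)\<lparr>carrier := P\<rparr>) (subtopology (prod_topology TA TB) P) B TB snd"
proof -
  note A = cpairD[OF cA] and B = cpairD[OF cB] and C = cpairD[OF cC]
  interpret A: group A by (rule A(1))
  interpret B: group B by (rule B(1))
  interpret C: group C by (rule C(1))
  have hf: "f \<in> hom A C" and cf: "continuous_map TA TC f" and sf: "f ` carrier A = carrier C"
    and kf: "finite (kernel A C f)" using f by (auto simp: fk_epi_def)
  have hg: "g \<in> hom B C" and cg: "continuous_map TB TC g" and sg: "g ` carrier B = carrier C"
    and kg: "finite (kernel B C g)" using g by (auto simp: fk_epi_def)
  have fh: "group_hom A C f" by (simp add: group_hom_def group_hom_axioms_def hf A(1) C(1))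
  have gh: "group_hom B C g" by (simp add: group_hom_def group_hom_axioms_def hg B(1) C(1))
  define Xt where "Xt = prod_topology TA TB"
  define Yt where "Yt = subtopology Xt P"
  define D where "D = (A \<times>\<times> B)\<lparr>carrier := P\<rparr>"
  have gAB: "group (A \<times>\<times> B)" by (rule DirProd_group[OF A(1) B(1)])
  interpret AB: group "A \<times>\<times> B" by (rule gAB)
  have Psub: "P \<subseteq> carrier A \<times> carrier B" using P by auto
  have sP: "subgroup P (A \<times>\<times> B)"
  proof (rule AB.subgroupI)
    show "P \<subseteq> carrier (A \<times>\<times> B)" using Psub by simp
    have "(\<one>\<^bsub>A\<^esub>, \<one>\<^bsub>B\<^esub>) \<in> P" using P
      by (simp add: group_hom.hom_one[OF fh] group_hom.hom_one[OF gh])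
    then show "P \<noteq> {}" by blast
  next
    fix z assume z: "z \<in> P"
    then obtain a b where ab: "z = (a, b)" "a \<in> carrier A" "b \<in> carrier B" "f a = g b" using P by auto
    then show "inv\<^bsub>A \<times>\<times> B\<^esub> z \<in> P" using P
      by (simp add: A(1) B(1) group_hom.hom_inv[OF fh] group_hom.hom_inv[OF gh])
  next
    fix z w assume "z \<in> P" "w \<in> P"
    then show "z \<otimes>\<^bsub>A \<times>\<times> B\<^esub> w \<in> P" using P by (auto simp: mult_DirProd' group_hom.hom_mult[OF fh] group_hom.hom_mult[OF gh])
  qed
  have gD: "group D" unfolding D_def by (rule subgroup.subgroup_is_group[OF sP gAB])
  have tY: "topspace Yt = P" using Psub by (auto simp: Yt_def Xt_def A(2) B(2))
  have carD: "carrier D = P" by (simp add: D_def)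
  have multD: "x \<otimes>\<^bsub>D\<^esub> y = (fst x \<otimes>\<^bsub>A\<^esub> fst y, snd x \<otimes>\<^bsub>B\<^esub> snd y)" for x y
    by (simp add: D_def mult_DirProd')
  have invD: "inv\<^bsub>D\<^esub> z = (inv\<^bsub>A\<^esub> fst z, inv\<^bsub>B\<^esub> snd z)" if "z \<in> P" for z
  proof -
    have "inv\<^bsub>D\<^esub> z = inv\<^bsub>A \<times>\<times> B\<^esub> z" unfolding D_def using AB.m_inv_consistent[OF sP that] .
    then show ?thesis using that Psub by (cases z) (auto simp: A(1) B(1))
  qed
  have cfst: "continuous_map Yt TA fst" unfolding Yt_def Xt_def
    by (rule continuous_map_from_subtopology[OF continuous_map_fst])
  have csnd: "continuous_map Yt TB snd" unfolding Yt_def Xt_def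
    by (rule continuous_map_from_subtopology[OF continuous_map_snd])
  have PX: "closedin Xt P"
  proof -
    have "closedin Xt {z \<in> topspace Xt. (f \<circ> fst) z = (g \<circ> snd) z}"
      unfolding Xt_def by (rule closedin_continuous_maps_eq[OF C(6) continuous_map_compose[OF continuous_map_fst cf]
           continuous_map_compose[OF continuous_map_snd cg]])
    moreover have "{z \<in> topspace Xt. (f \<circ> fst) z = (g \<circ> snd) z} = P"
      using P by (auto simp: Xt_def A(2) B(2))
    ultimately show ?thesis by simp
  qed
  have compY: "compact_space Yt" unfolding Yt_def
    by (rule compact_space_subtopology[OF closedin_compact_space[OF _ PX]])
       (simp add: Xt_def compact_space_prod_topology A(5) B(5))
  have hausY: "Hausdorff_space Yt" unfolding Yt_def
    by (rule Hausdorff_space_subtopology) (simp add: Xt_def Hausdorff_space_prod_topology A(6) B(6))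
  have cmult: "continuous_map (prod_topology Yt Yt) Yt (\<lambda>(x, y). x \<otimes>\<^bsub>D\<^esub> y)"
  proof -
    have c1: "continuous_map (prod_topology Yt Yt) TA (\<lambda>z. fst (fst z) \<otimes>\<^bsub>A\<^esub> fst (snd z))"
      by (rule cont_mult_comp[OF A(3)])
         (auto intro: continuous_map_compose[OF continuous_map_fst cfst, unfolded o_def]
            continuous_map_compose[OF continuous_map_snd cfst, unfolded o_def])
    have c2: "continuous_map (prod_topology Yt Yt) TB (\<lambda>z. snd (fst z) \<otimes>\<^bsub>B\<^esub> snd (snd z))"
      by (rule cont_mult_comp[OF B(3)])
         (auto intro: continuous_map_compose[OF continuous_map_fst csnd, unfolded o_def]
            continuous_map_compose[OF continuous_map_snd csnd, unfolded o_def])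
    have "continuous_map (prod_topology Yt Yt) Xt
        (\<lambda>z. (fst (fst z) \<otimes>\<^bsub>A\<^esub> fst (snd z), snd (fst z) \<otimes>\<^bsub>B\<^esub> snd (snd z)))"
      unfolding Xt_def by (rule continuous_map_pairedI[OF c1 c2])
    moreover have "(\<lambda>(x, y). x \<otimes>\<^bsub>D\<^esub> y) = 
        (\<lambda>z. (fst (fst z) \<otimes>\<^bsub>A\<^esub> fst (snd z), snd (fst z) \<otimes>\<^bsub>B\<^esub> snd (snd z)))"
      by (auto simp: multD)
    moreover have "(\<lambda>(x, y). x \<otimes>\<^bsub>D\<^esub> y) \<in> topspace (prod_topology Yt Yt) \<rightarrow> P"
      using monoid.m_closed[OF group.is_monoid[OF gD]] by (auto simp: tY carD)
    ultimately show ?thesis unfolding Yt_def by (simp add: continuous_map_in_subtopology)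
  qed
  have cinv: "continuous_map Yt Yt (m_inv D)"
  proof -
    have "continuous_map Yt Xt (\<lambda>z. (inv\<^bsub>A\<^esub> fst z, inv\<^bsub>B\<^esub> snd z))"
      unfolding Xt_def
      by (rule continuous_map_pairedI)
         (auto intro: continuous_map_compose[OF cfst A(4), unfolded o_def]
            continuous_map_compose[OF csnd B(4), unfolded o_def])
    then have "continuous_map Yt Xt (m_inv D)"
      by (rule continuous_map_eq) (simp add: tY invD)
    moreover have "m_inv D \<in> topspace Yt \<rightarrow> P"
      using group.inv_closed[OF gD] by (auto simp: tY carD)
    ultimately show ?thesis unfolding Yt_def by (simp add: continuous_map_in_subtopology)
  qed
  have cgD: "compact_group D Yt"
    using gD tY carD cmult cinv compY hausY by (simp add: compact_group_def)
  define \<delta> where "\<delta> = (\<lambda>z. (\<alpha> (fst z), \<beta> (snd z)))"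
  have hA: "\<alpha> \<in> hom A A" and bA: "bij_betw \<alpha> (carrier A) (carrier A)"
    using A(7) by (auto simp: iso_def)
  have hB: "\<beta> \<in> hom B B" and bB: "bij_betw \<beta> (carrier B) (carrier B)"
    using B(7) by (auto simp: iso_def)
  have bC: "bij_betw \<gamma> (carrier C) (carrier C)" using C(7) by (auto simp: iso_def)
  have dP: "\<delta> z \<in> P" if "z \<in> P" for z
  proof -
    have z: "fst z \<in> carrier A" "snd z \<in> carrier B" "f (fst z) = g (snd z)" using that P by auto
    then have "\<alpha> (fst z) \<in> carrier A" "\<beta> (snd z) \<in> carrier B" using hA hB by (auto simp: hom_def)
    moreover have "f (\<alpha> (fst z)) = g (\<beta> (snd z))" using z fa gb by simp
    ultimately show ?thesis using P by (simp add: \<delta>_def)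
  qed
  have dsurj: "\<delta> ` P = P"
  proof
    show "\<delta> ` P \<subseteq> P" using dP by auto
    show "P \<subseteq> \<delta> ` P"
    proof
      fix z assume z: "z \<in> P"
      then obtain a b where ab: "z = (a, b)" "a \<in> carrier A" "b \<in> carrier B" "f a = g b" using P by auto
      obtain a' where a': "a' \<in> carrier A" "\<alpha> a' = a" using bA ab(2) by (metis bij_betw_def imageE)
      obtain b' where b': "b' \<in> carrier B" "\<beta> b' = b" using bB ab(3) by (metis bij_betw_def imageE)
      have "\<gamma> (f a') = \<gamma> (g b')" using fa gb a' b' ab by metis
      moreover have "f a' \<in> carrier C" "g b' \<in> carrier C" using a' b' hf hg by (auto simp: hom_def)
      ultimately have "f a' = g b'" using bC by (metis bij_betw_def inj_on_def)
      then have "(a', b') \<in> P" using P a' b' by auto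
      moreover have "\<delta> (a', b') = z" using a' b' ab by (simp add: \<delta>_def)
      ultimately show "z \<in> \<delta> ` P" by blast
    qed
  qed
  have dinj: "inj_on \<delta> P"
  proof (rule inj_onI)
    fix z w assume zw: "z \<in> P" "w \<in> P" "\<delta> z = \<delta> w"
    have ia: "inj_on \<alpha> (carrier A)" and ib: "inj_on \<beta> (carrier B)" using bA bB by (auto simp: bij_betw_def)
    have m: "fst z \<in> carrier A" "fst w \<in> carrier A" "snd z \<in> carrier B" "snd w \<in> carrier B"
      using zw(1,2) Psub by auto
    have e: "\<alpha> (fst z) = \<alpha> (fst w)" "\<beta> (snd z) = \<beta> (snd w)" using zw(3) by (simp_all add: \<delta>_def)
    have "fst z = fst w" by (rule inj_onD[OF ia e(1) m(1,2)])
    moreover have "snd z = snd w" by (rule inj_onD[OF ib e(2) m(3,4)])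
    ultimately show "z = w" by (simp add: prod_eq_iff)
  qed
  have dhom: "\<delta> \<in> hom D D"
  proof -
    have "\<delta> (x \<otimes>\<^bsub>D\<^esub> y) = \<delta> x \<otimes>\<^bsub>D\<^esub> \<delta> y" if "x \<in> P" "y \<in> P" for x y
    proof -
      have "fst x \<in> carrier A" "fst y \<in> carrier A" "snd x \<in> carrier B" "snd y \<in> carrier B"
        using that Psub by auto
      then show ?thesis by (simp add: multD \<delta>_def hom_mult[OF hA] hom_mult[OF hB])
    qed
    then show ?thesis using dP by (simp add: hom_def carD)
  qed
  have diso: "\<delta> \<in> iso D D" using dhom dinj dsurj by (simp add: iso_def bij_betw_def carD)
  have dcont: "continuous_map Yt Yt \<delta>"
  proof -
    have "continuous_map Yt Xt \<delta>" unfolding Xt_def \<delta>_def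
      by (rule continuous_map_pairedI)
        (auto intro: continuous_map_compose[OF cfst homeomorphic_imp_continuous_map[OF A(8)], unfolded o_def]
            continuous_map_compose[OF csnd homeomorphic_imp_continuous_map[OF B(8)], unfolded o_def])
    then have "continuous_map Yt (subtopology Xt P) \<delta>" using dP tY by (simp add: continuous_map_in_subtopology Pi_iff)
    then show ?thesis by (simp add: Yt_def)
  qed
  have dhomeo: "homeomorphic_map Yt Yt \<delta>"
    by (rule continuous_imp_homeomorphic_map[OF dcont compY hausY]) (simp_all add: tY dsurj dinj)
  have cpD: "cpair D Yt \<delta>" using cgD diso dhomeo by (simp add: cpair_def top_group_aut_def)
  have ffst: "fk_epi D Yt A TA fst"
  proof -
    have "fst \<in> hom D A" using Psub by (auto simp: hom_def carD multD)
    moreover have "fst ` carrier D = carrier A"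
    proof
      show "fst ` carrier D \<subseteq> carrier A" using Psub carD by auto
      show "carrier A \<subseteq> fst ` carrier D"
      proof
        fix a assume a: "a \<in> carrier A"
        then have "f a \<in> g ` carrier B" using sf sg by blast
        then obtain b where "b \<in> carrier B" "g b = f a" by auto
        then have "(a, b) \<in> carrier D" using a P carD by auto
        then show "a \<in> fst ` carrier D" by force
      qed
    qed
    moreover have "kernel D A fst \<subseteq> {\<one>\<^bsub>A\<^esub>} \<times> kernel B C g"
      using P by (auto simp: kernel_def carD group_hom.hom_one[OF fh])
    then have "finite (kernel D A fst)" using kg by (meson finite_SigmaI finite.emptyI finite.insertI finite_subset)
    ultimately show ?thesis using cfst by (simp add: fk_epi_def)
  qed
  have fsnd: "fk_epi D Yt B TB snd"
  proof -
    have "snd \<in> hom D B" using Psub by (auto simp: hom_def carD multD)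
    moreover have "snd ` carrier D = carrier B"
    proof
      show "snd ` carrier D \<subseteq> carrier B" using Psub carD by auto
      show "carrier B \<subseteq> snd ` carrier D"
      proof
        fix b assume b: "b \<in> carrier B"
        then have "g b \<in> f ` carrier A" using sf sg by blast
        then obtain a where "a \<in> carrier A" "f a = g b" by auto
        then have "(a, b) \<in> carrier D" using b P carD by auto
        then show "b \<in> snd ` carrier D" by force
      qed
    qed
    moreover have "kernel D B snd \<subseteq> kernel A C f \<times> {\<one>\<^bsub>B\<^esub>}"
      using P by (auto simp: kernel_def carD group_hom.hom_one[OF gh])
    then have "finite (kernel D B snd)" using kf by (meson finite_SigmaI finite.emptyI finite.insertI finite_subset)
    ultimately show ?thesis using csnd by (simp add: fk_epi_def)
  qed
  show ?thesis using cpD ffst fsnd by (simp add: D_def Yt_def Xt_def \<delta>_def)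
qed

definition qtop :: "'a topology \<Rightarrow> ('a \<Rightarrow> 'b) \<Rightarrow> 'b set \<Rightarrow> 'b topology" where
  "qtop Xq q Y0 = topology (\<lambda>U. U \<subseteq> Y0 \<and> openin Xq {x \<in> topspace Xq. q x \<in> U})"

lemma qtop:
  assumes "q ` topspace Xq = Y0"
  shows "quotient_map Xq (qtop Xq q Y0) q" "topspace (qtop Xq q Y0) = Y0"
proof -
  have ist: "istopology (\<lambda>U. U \<subseteq> Y0 \<and> openin Xq {x \<in> topspace Xq. q x \<in> U})"
    unfolding istopology_def
  proof (rule conjI; intro allI impI)
    fix S T assume "S \<subseteq> Y0 \<and> openin Xq {x \<in> topspace Xq. q x \<in> S}" "T \<subseteq> Y0 \<and> openin Xq {x \<in> topspace Xq. q x \<in> T}"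
    moreover have "{x \<in> topspace Xq. q x \<in> S \<inter> T} = {x \<in> topspace Xq. q x \<in> S} \<inter> {x \<in> topspace Xq. q x \<in> T}" by auto
    ultimately show "S \<inter> T \<subseteq> Y0 \<and> openin Xq {x \<in> topspace Xq. q x \<in> S \<inter> T}" by auto
  next
    fix K assume K: "\<forall>U\<in>K. U \<subseteq> Y0 \<and> openin Xq {x \<in> topspace Xq. q x \<in> U}"
    have "{x \<in> topspace Xq. q x \<in> \<Union>K} = \<Union>((\<lambda>U. {x \<in> topspace Xq. q x \<in> U}) ` K)" by auto
    moreover have "openin Xq (\<Union>((\<lambda>U. {x \<in> topspace Xq. q x \<in> U}) ` K))" using K by auto
    ultimately show "\<Union>K \<subseteq> Y0 \<and> openin Xq {x \<in> topspace Xq. q x \<in> \<Union>K}" using K by auto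
  qed
  have op: "openin (qtop Xq q Y0) = (\<lambda>U. U \<subseteq> Y0 \<and> openin Xq {x \<in> topspace Xq. q x \<in> U})"
    unfolding qtop_def using ist by simp
  have "{x \<in> topspace Xq. q x \<in> Y0} = topspace Xq" using assms by auto
  then have "openin (qtop Xq q Y0) Y0" by (simp add: op)
  then show tp: "topspace (qtop Xq q Y0) = Y0" unfolding topspace_def using op by auto
  show "quotient_map Xq (qtop Xq q Y0) q"
    unfolding quotient_map_def tp using assms op by auto
qed

lemma rcos_image: "N #>\<^bsub>G\<^esub> x = (\<lambda>h. h \<otimes>\<^bsub>G\<^esub> x) ` N"
  by (auto simp: r_coset_def)

lemma finite_quotient:
  fixes G :: "'a monoid"
  assumes cG: "cpair G T \<alpha>" and nN: "N \<lhd> G" and fN: "finite N" and aN: "\<alpha> ` N \<subseteq> N"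
    and q: "q = (\<lambda>x. N #>\<^bsub>G\<^esub> x)" and S: "S = qtop T q (carrier (G Mod N))"
  shows "cpair (G Mod N) S (\<lambda>Xq. \<alpha> ` Xq) \<and> fk_epi G T (G Mod N) S q
     \<and> (\<forall>x\<in>carrier G. \<alpha> ` (q x) = q (\<alpha> x))"
proof -
  note Gf = cpairD[OF cG]
  interpret normal N G by (rule nN)
  have sN: "subgroup N G" by (rule subgroup_axioms)
  have Ncar: "N \<subseteq> carrier G" by (rule subset)
  have qim: "q ` topspace T = carrier (G Mod N)" by (simp add: Gf(2) q carrier_FactGroup)
  note qq = qtop[OF qim, folded S]
  have qm: "quotient_map T S q" and tS: "topspace S = carrier (G Mod N)" using qq by auto
  have cq: "continuous_map T S q" by (rule quotient_imp_continuous_map[OF qm])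
  have compS: "compact_space S"
    using image_compactin[OF Gf(5)[unfolded compact_space_def] cq] qim tS by (simp add: compact_space_def)
  have lcont: "continuous_map T T (\<lambda>x. n \<otimes>\<^bsub>G\<^esub> x)" if "n \<in> carrier G" for n
    by (rule cont_mult_comp[OF Gf(3)]) (auto simp: Gf(2) that)
  have lhomeo: "homeomorphic_map T T (\<lambda>x. n \<otimes>\<^bsub>G\<^esub> x)" if n: "n \<in> carrier G" for n
  proof -
    have "homeomorphic_maps T T (\<lambda>x. n \<otimes>\<^bsub>G\<^esub> x) (\<lambda>x. inv\<^bsub>G\<^esub> n \<otimes>\<^bsub>G\<^esub> x)"
      unfolding homeomorphic_maps_def using n lcont[OF n] lcont[of "inv\<^bsub>G\<^esub> n"]
      by (simp add: Gf(2) m_assoc[symmetric])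
    then show ?thesis using homeomorphic_map_maps by blast
  qed
  have qeq: "(N #>\<^bsub>G\<^esub> x = N #>\<^bsub>G\<^esub> c) \<longleftrightarrow> (\<exists>n\<in>N. x = n \<otimes>\<^bsub>G\<^esub> c)" if "x \<in> carrier G" "c \<in> carrier G" for x c
  proof
    assume "N #>\<^bsub>G\<^esub> x = N #>\<^bsub>G\<^esub> c"
    then have "x \<in> N #>\<^bsub>G\<^esub> c" using rcos_self[OF that(1) sN] by simp
    then show "\<exists>n\<in>N. x = n \<otimes>\<^bsub>G\<^esub> c" by (auto simp: r_coset_def)
  next
    assume "\<exists>n\<in>N. x = n \<otimes>\<^bsub>G\<^esub> c"
    then have "x \<in> N #>\<^bsub>G\<^esub> c" by (auto simp: r_coset_def)
    then show "N #>\<^bsub>G\<^esub> x = N #>\<^bsub>G\<^esub> c" using repr_independence[OF _ that(2) sN] by simp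
  qed
  have clm: "closed_map T S q"
    unfolding closed_map_def
  proof (intro allI impI)
    fix C assume C: "closedin T C"
    then have Cc: "C \<subseteq> carrier G" using closedin_subset Gf(2) by auto
    have eq: "{x \<in> topspace T. q x \<in> q ` C} = (\<Union>n\<in>N. (\<lambda>x. n \<otimes>\<^bsub>G\<^esub> x) ` C)"
    proof
      show "{x \<in> topspace T. q x \<in> q ` C} \<subseteq> (\<Union>n\<in>N. (\<lambda>x. n \<otimes>\<^bsub>G\<^esub> x) ` C)"
      proof clarify
        fix x c assume x: "x \<in> topspace T" "q x = q c" "c \<in> C"
        then obtain n where "n \<in> N" "x = n \<otimes>\<^bsub>G\<^esub> c" using qeq[of x c] Cc Gf(2) by (auto simp: q)
        then show "x \<in> (\<Union>n\<in>N. (\<lambda>x. n \<otimes>\<^bsub>G\<^esub> x) ` C)" using x(3) by blast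
      qed
      show "(\<Union>n\<in>N. (\<lambda>x. n \<otimes>\<^bsub>G\<^esub> x) ` C) \<subseteq> {x \<in> topspace T. q x \<in> q ` C}"
      proof clarify
        fix n c assume nc: "n \<in> N" "c \<in> C"
        then have cc: "c \<in> carrier G" "n \<otimes>\<^bsub>G\<^esub> c \<in> carrier G" using Cc Ncar by auto
        then have "q (n \<otimes>\<^bsub>G\<^esub> c) = q c" using qeq[OF cc(2) cc(1)] nc by (auto simp: q)
        then show "n \<otimes>\<^bsub>G\<^esub> c \<in> topspace T \<and> q (n \<otimes>\<^bsub>G\<^esub> c) \<in> q ` C" using cc nc by (auto simp: Gf(2))
      qed
    qed
    have "closedin T (\<Union>n\<in>N. (\<lambda>x. n \<otimes>\<^bsub>G\<^esub> x) ` C)"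
      by (rule closedin_Union) 
         (use fN C Ncar in \<open>auto intro: homeomorphic_imp_closed_map[OF lhomeo, unfolded closed_map_def, rule_format]\<close>)
    then have "closedin T {x \<in> topspace T. q x \<in> q ` C}" by (simp only: eq)
    moreover have "q ` C \<subseteq> topspace S" using Cc tS by (auto simp: q carrier_FactGroup)
    ultimately show "closedin S (q ` C)" using qm unfolding quotient_map_closedin by auto
  qed
  have hausS: "Hausdorff_space S"
    using normal_Hausdorff_space_closed_continuous_map_image[OF
        compact_Hausdorff_or_regular_imp_normal_space[OF Gf(5)] Gf(6) clm cq] qim tS Gf(6) by simp
  have gL: "group (G Mod N)" by (rule factorgroup_is_group)
  have qhom: "q \<in> hom G (G Mod N)" unfolding q by (rule r_coset_hom_Mod)
  have qmult: "q x \<otimes>\<^bsub>G Mod N\<^esub> q y = q (x \<otimes>\<^bsub>G\<^esub> y)" if "x \<in> carrier G" "y \<in> carrier G" for x y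
    using that by (simp add: q rcos_sum)
  have cmult: "continuous_map (prod_topology S S) S (\<lambda>(x, y). x \<otimes>\<^bsub>G Mod N\<^esub> y)"
  proof -
    define qq where "qq = (\<lambda>(x,y). (q x, q y))"
    have cqq: "continuous_map (prod_topology T T) (prod_topology S S) qq"
      unfolding qq_def using cq by (simp add: continuous_map_prod_top)
    have qqm: "quotient_map (prod_topology T T) (prod_topology S S) qq"
    proof (rule continuous_imp_quotient_map[OF cqq])
      show "compact_space (prod_topology T T)" by (simp add: compact_space_prod_topology Gf(5))
      show "Hausdorff_space (prod_topology S S)" by (simp add: Hausdorff_space_prod_topology hausS)
      show "qq ` topspace (prod_topology T T) = topspace (prod_topology S S)"
        using qim tS by (simp add: qq_def image_paired_Times)
    qed
    have "continuous_map (prod_topology T T) S (q \<circ> (\<lambda>(x, y). x \<otimes>\<^bsub>G\<^esub> y))"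
      by (rule continuous_map_compose[OF Gf(3) cq])
    then have "continuous_map (prod_topology T T) S ((\<lambda>(x, y). x \<otimes>\<^bsub>G Mod N\<^esub> y) \<circ> qq)"
      by (rule continuous_map_eq) (auto simp: qq_def Gf(2) qmult[simplified])
    then show ?thesis by (rule continuous_compose_quotient_map[OF qqm])
  qed
  have qinv: "inv\<^bsub>G Mod N\<^esub> (q x) = q (inv\<^bsub>G\<^esub> x)" if "x \<in> carrier G" for x
  proof -
    have "q x \<in> carrier (G Mod N)" using that by (simp add: q carrier_FactGroup)
    then show ?thesis using that by (simp add: inv_FactGroup q rcos_inv)
  qed
  have cinv: "continuous_map S S (m_inv (G Mod N))"
  proof -
    have "continuous_map T S (q \<circ> m_inv G)" by (rule continuous_map_compose[OF Gf(4) cq])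
    then have "continuous_map T S (m_inv (G Mod N) \<circ> q)"
      by (rule continuous_map_eq) (simp add: Gf(2) qinv)
    then show ?thesis by (rule continuous_compose_quotient_map[OF qm])
  qed
  have cgL: "compact_group (G Mod N) S"
    using gL tS cmult cinv compS hausS by (simp add: compact_group_def)
  have hA: "\<alpha> \<in> hom G G" and bA: "bij_betw \<alpha> (carrier G) (carrier G)"
    using Gf(7) by (auto simp: iso_def)
  have ia: "inj_on \<alpha> (carrier G)" using bA by (simp add: bij_betw_def)
  have aNeq: "\<alpha> ` N = N"
  proof (rule card_subset_eq[OF fN aN])
    show "card (\<alpha> ` N) = card N" using inj_on_subset[OF ia Ncar] by (rule card_image)
  qed
  have aq: "\<alpha> ` (q x) = q (\<alpha> x)" if x: "x \<in> carrier G" for x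
  proof -
    have "\<alpha> ` (q x) = (\<lambda>h. \<alpha> h \<otimes>\<^bsub>G\<^esub> \<alpha> x) ` N"
      unfolding q rcos_image image_image
      by (rule image_cong) (use x Ncar hom_mult[OF hA] in auto)
    also have "\<dots> = (\<lambda>h. h \<otimes>\<^bsub>G\<^esub> \<alpha> x) ` (\<alpha> ` N)" by (simp add: image_image)
    finally show ?thesis by (simp add: aNeq q rcos_image)
  qed
  have aC: "\<alpha> x \<in> carrier G" if "x \<in> carrier G" for x using hA that by (auto simp: hom_def)
  have carL: "carrier (G Mod N) = q ` carrier G" by (simp add: q carrier_FactGroup)
  have ghom: "(\<lambda>Xq. \<alpha> ` Xq) \<in> hom (G Mod N) (G Mod N)"
  proof (rule homI)
    fix Xq assume "Xq \<in> carrier (G Mod N)"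
    then obtain x where "x \<in> carrier G" "Xq = q x" using carL by auto
    then show "\<alpha> ` Xq \<in> carrier (G Mod N)" using aq aC carL by auto
  next
    fix Xq Yq assume "Xq \<in> carrier (G Mod N)" "Yq \<in> carrier (G Mod N)"
    then obtain x y where xy: "x \<in> carrier G" "Xq = q x" "y \<in> carrier G" "Yq = q y" using carL by auto
    have "\<alpha> ` (Xq \<otimes>\<^bsub>G Mod N\<^esub> Yq) = q (\<alpha> (x \<otimes>\<^bsub>G\<^esub> y))" using xy by (simp add: qmult[simplified] aq)
    also have "\<dots> = q (\<alpha> x \<otimes>\<^bsub>G\<^esub> \<alpha> y)" using xy hom_mult[OF hA] by simp
    also have "\<dots> = \<alpha> ` Xq \<otimes>\<^bsub>G Mod N\<^esub> \<alpha> ` Yq" using xy aC by (simp add: qmult[simplified] aq)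
    finally show "\<alpha> ` (Xq \<otimes>\<^bsub>G Mod N\<^esub> Yq) = \<alpha> ` Xq \<otimes>\<^bsub>G Mod N\<^esub> \<alpha> ` Yq" .
  qed
  have qsub: "q x \<subseteq> carrier G" if "x \<in> carrier G" for x
    using r_coset_subset_G[OF Ncar that] by (simp add: q)
  have ginj: "inj_on (\<lambda>Xq. \<alpha> ` Xq) (carrier (G Mod N))"
  proof (rule inj_onI)
    fix Xq Yq assume "Xq \<in> carrier (G Mod N)" "Yq \<in> carrier (G Mod N)" "\<alpha> ` Xq = \<alpha> ` Yq"
    moreover have "Xq \<subseteq> carrier G" "Yq \<subseteq> carrier G" using calculation(1,2) carL
      using qsub by auto
    ultimately show "Xq = Yq" using inj_on_image_eq_iff[OF ia] by blast
  qed
  have gsurj: "(\<lambda>Xq. \<alpha> ` Xq) ` carrier (G Mod N) = carrier (G Mod N)"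
  proof
    show "(\<lambda>Xq. \<alpha> ` Xq) ` carrier (G Mod N) \<subseteq> carrier (G Mod N)" using ghom by (auto simp: hom_def)
    show "carrier (G Mod N) \<subseteq> (\<lambda>Xq. \<alpha> ` Xq) ` carrier (G Mod N)"
    proof
      fix Z assume "Z \<in> carrier (G Mod N)"
      then obtain z where z: "z \<in> carrier G" "Z = q z" using carL by auto
      then have "z \<in> \<alpha> ` carrier G" using bA by (simp add: bij_betw_def)
      then obtain x where x: "x \<in> carrier G" "\<alpha> x = z" by blast
      then have "Z = \<alpha> ` (q x)" using z aq by simp
      moreover have "q x \<in> carrier (G Mod N)" using x carL by auto
      ultimately show "Z \<in> (\<lambda>Xq. \<alpha> ` Xq) ` carrier (G Mod N)" by blast
    qed
  qed
  have giso: "(\<lambda>Xq. \<alpha> ` Xq) \<in> iso (G Mod N) (G Mod N)"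
    using ghom ginj gsurj by (simp add: iso_def bij_betw_def)
  have gcont: "continuous_map S S (\<lambda>Xq. \<alpha> ` Xq)"
  proof -
    have "continuous_map T S (q \<circ> \<alpha>)"
      by (rule continuous_map_compose[OF homeomorphic_imp_continuous_map[OF Gf(8)] cq])
    then have "continuous_map T S ((\<lambda>Xq. \<alpha> ` Xq) \<circ> q)"
      by (rule continuous_map_eq) (simp add: Gf(2) aq)
    then show ?thesis by (rule continuous_compose_quotient_map[OF qm])
  qed
  have ghomeo: "homeomorphic_map S S (\<lambda>Xq. \<alpha> ` Xq)"
    by (rule continuous_imp_homeomorphic_map[OF gcont compS hausS]) (simp_all add: tS gsurj ginj)
  have cpL: "cpair (G Mod N) S (\<lambda>Xq. \<alpha> ` Xq)"
    using cgL giso ghomeo by (simp add: cpair_def top_group_aut_def)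
  have "kernel G (G Mod N) q \<subseteq> N"
    using coset_join1[OF _ _ sN] by (auto simp: kernel_def q)
  then have "finite (kernel G (G Mod N) q)" using fN finite_subset by blast
  then have fq: "fk_epi G T (G Mod N) S q" using qhom cq carL by (simp add: fk_epi_def)
  show ?thesis using cpL fq aq by blast
qed

lemma cocomm_to_cocodom:
  fixes G1 :: "'a monoid" and G2 :: "'b monoid"
  assumes c1: "cpair G1 T1 a1" and c2: "cpair G2 T2 a2"
    and cc: "cocomm_via TYPE('c) G1 T1 a1 G2 T2 a2"
  shows "cocodom_via TYPE('a set) G1 T1 a1 G2 T2 a2"
proof -
  obtain G :: "'c monoid" and T \<alpha> \<phi>1 \<phi>2 where cG: "cpair G T \<alpha>"
    and f1: "fk_epi G T G1 T1 \<phi>1" and f2: "fk_epi G T G2 T2 \<phi>2"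
    and i1: "\<forall>x\<in>carrier G. \<phi>1 (\<alpha> x) = a1 (\<phi>1 x)"
    and i2: "\<forall>x\<in>carrier G. \<phi>2 (\<alpha> x) = a2 (\<phi>2 x)"
    using cc unfolding cocomm_via_def by blast
  note Gf = cpairD[OF cG] and F1 = cpairD[OF c1] and F2 = cpairD[OF c2]
  have h1: "\<phi>1 \<in> hom G G1" and s1: "\<phi>1 ` carrier G = carrier G1" and k1: "finite (kernel G G1 \<phi>1)"
    and ct1: "continuous_map T T1 \<phi>1" using f1 by (auto simp: fk_epi_def)
  have h2: "\<phi>2 \<in> hom G G2" and s2: "\<phi>2 ` carrier G = carrier G2" and k2: "finite (kernel G G2 \<phi>2)"
    and ct2: "continuous_map T T2 \<phi>2" using f2 by (auto simp: fk_epi_def)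
  have gh1: "group_hom G G1 \<phi>1" by (simp add: group_hom_def group_hom_axioms_def Gf(1) F1(1) h1)
  have gh2: "group_hom G G2 \<phi>2" by (simp add: group_hom_def group_hom_axioms_def Gf(1) F2(1) h2)
  define N where "N = \<phi>1 ` kernel G G2 \<phi>2"
  have nK: "kernel G G2 \<phi>2 \<lhd> G" by (rule group_hom.normal_kernel[OF gh2])
  have nN: "N \<lhd> G1" unfolding N_def by (rule normal.surj_hom_normal_subgroup[OF nK gh1 s1])
  have fN: "finite N" unfolding N_def using k2 by simp
  have ha2: "a2 \<in> hom G2 G2" using F2(7) by (simp add: iso_def)
  have ha: "\<alpha> \<in> hom G G" using Gf(7) by (simp add: iso_def)
  have aN: "a1 ` N \<subseteq> N"
  proof
    fix z assume "z \<in> a1 ` N"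
    then obtain k where k: "k \<in> carrier G" "\<phi>2 k = \<one>\<^bsub>G2\<^esub>" "z = a1 (\<phi>1 k)"
      by (auto simp: N_def kernel_def)
    have ak: "\<alpha> k \<in> carrier G" using ha k by (auto simp: hom_def)
    have "\<phi>2 (\<alpha> k) = a2 \<one>\<^bsub>G2\<^esub>" using i2 k by simp
    also have "\<dots> = \<one>\<^bsub>G2\<^esub>"
      using group_hom.hom_one[of G2 G2 a2] ha2 F2(1) by (simp add: group_hom_def group_hom_axioms_def)
    finally have "\<alpha> k \<in> kernel G G2 \<phi>2" using ak by (simp add: kernel_def)
    moreover have "z = \<phi>1 (\<alpha> k)" using i1 k by simp
    ultimately show "z \<in> N" by (simp add: N_def)
  qed
  define q where "q = (\<lambda>x. N #>\<^bsub>G1\<^esub> x)"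
  define S where "S = qtop T1 q (carrier (G1 Mod N))"
  have FQ: "cpair (G1 Mod N) S (\<lambda>U. a1 ` U) \<and> fk_epi G1 T1 (G1 Mod N) S q
     \<and> (\<forall>x\<in>carrier G1. a1 ` (q x) = q (a1 x))"
    by (rule finite_quotient[OF c1 nN fN aN q_def S_def])
  have cL: "cpair (G1 Mod N) S (\<lambda>U. a1 ` U)" and fq: "fk_epi G1 T1 (G1 Mod N) S q"
    and iq: "\<forall>x\<in>carrier G1. a1 ` (q x) = q (a1 x)" using FQ by auto
  have gL: "group (G1 Mod N)" using cpairD(1)[OF cL] .
  have hq: "q \<in> hom G1 (G1 Mod N)" and sq: "q ` carrier G1 = carrier (G1 Mod N)"
    and ctq: "continuous_map T1 S q" using fq by (auto simp: fk_epi_def)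
  interpret N1: normal N G1 by (rule nN)
  define \<psi>2 where "\<psi>2 = (\<lambda>y. q (\<phi>1 (SOME g. g \<in> carrier G \<and> \<phi>2 g = y)))"
  have key: "\<psi>2 (\<phi>2 g) = q (\<phi>1 g)" if g: "g \<in> carrier G" for g
  proof -
    define g' where "g' = (SOME g'. g' \<in> carrier G \<and> \<phi>2 g' = \<phi>2 g)"
    have g': "g' \<in> carrier G" "\<phi>2 g' = \<phi>2 g" unfolding g'_def by (rule someI2[of _ g]; use g in auto)+
    define k where "k = inv\<^bsub>G\<^esub> g \<otimes>\<^bsub>G\<^esub> g'"
    have kc: "k \<in> carrier G" using g g' Gf(1) by (simp add: k_def group.inv_closed monoid.m_closed group.is_monoid)
    have "\<phi>2 k = inv\<^bsub>G2\<^esub> (\<phi>2 g) \<otimes>\<^bsub>G2\<^esub> \<phi>2 g'"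
      using g g' Gf(1) by (simp add: k_def group_hom.hom_inv[OF gh2] group_hom.hom_mult[OF gh2] group.inv_closed)
    also have "\<dots> = \<one>\<^bsub>G2\<^esub>" using g' g F2(1) group_hom.hom_closed[OF gh2 g]
      by (simp add: group.l_inv)
    finally have kK: "k \<in> kernel G G2 \<phi>2" using kc by (simp add: kernel_def)
    have gg: "g' = g \<otimes>\<^bsub>G\<^esub> k" using g g' Gf(1)
      by (simp add: k_def group.inv_solve_left group.inv_closed monoid.m_closed group.is_monoid
            monoid.m_assoc[symmetric] group.r_inv)
    have "\<phi>1 g' = \<phi>1 g \<otimes>\<^bsub>G1\<^esub> \<phi>1 k" using gg g kc group_hom.hom_mult[OF gh1] by simp
    moreover have nk: "\<phi>1 k \<in> N" using kK by (simp add: N_def)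
    ultimately have "q (\<phi>1 g') = q (\<phi>1 g) \<otimes>\<^bsub>G1 Mod N\<^esub> q (\<phi>1 k)"
      using hq g kc group_hom.hom_closed[OF gh1] by (simp add: hom_mult)
    also have "q (\<phi>1 k) = \<one>\<^bsub>G1 Mod N\<^esub>" using nk by (simp add: q_def N1.rcos_const[OF F1(1)])
    also have "q (\<phi>1 g) \<otimes>\<^bsub>G1 Mod N\<^esub> \<one>\<^bsub>G1 Mod N\<^esub> = q (\<phi>1 g)"
    proof -
      have "q (\<phi>1 g) \<in> carrier (G1 Mod N)" using hq g group_hom.hom_closed[OF gh1] by (auto simp: hom_def)
      then show ?thesis by (rule monoid.r_one[OF group.is_monoid[OF gL]])
    qed
    finally show ?thesis by (simp add: \<psi>2_def g'_def)
  qed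
  have car2: "carrier G2 = \<phi>2 ` carrier G" using s2 by simp
  have hp2: "\<psi>2 \<in> hom G2 (G1 Mod N)"
  proof (rule homI)
    fix y assume "y \<in> carrier G2"
    then obtain g where "g \<in> carrier G" "y = \<phi>2 g" using car2 by auto
    then show "\<psi>2 y \<in> carrier (G1 Mod N)" using key hq group_hom.hom_closed[OF gh1] by (auto simp: hom_def)
  next
    fix y y' assume "y \<in> carrier G2" "y' \<in> carrier G2"
    then obtain g g' where gg: "g \<in> carrier G" "y = \<phi>2 g" "g' \<in> carrier G" "y' = \<phi>2 g'" using car2 by auto
    have "\<psi>2 (y \<otimes>\<^bsub>G2\<^esub> y') = \<psi>2 (\<phi>2 (g \<otimes>\<^bsub>G\<^esub> g'))" using gg group_hom.hom_mult[OF gh2] by simp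
    also have "\<dots> = q (\<phi>1 (g \<otimes>\<^bsub>G\<^esub> g'))" using gg Gf(1) by (simp add: key group.is_monoid monoid.m_closed)
    also have "\<dots> = q (\<phi>1 g) \<otimes>\<^bsub>G1 Mod N\<^esub> q (\<phi>1 g')"
      using gg hq group_hom.hom_mult[OF gh1] group_hom.hom_closed[OF gh1] by (simp add: hom_mult)
    also have "\<dots> = \<psi>2 y \<otimes>\<^bsub>G1 Mod N\<^esub> \<psi>2 y'" using gg key by simp
    finally show "\<psi>2 (y \<otimes>\<^bsub>G2\<^esub> y') = \<psi>2 y \<otimes>\<^bsub>G1 Mod N\<^esub> \<psi>2 y'" .
  qed
  have sp2: "\<psi>2 ` carrier G2 = carrier (G1 Mod N)"
  proof -
    have "\<psi>2 ` carrier G2 = (\<lambda>g. \<psi>2 (\<phi>2 g)) ` carrier G" using car2 by (simp add: image_image)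
    also have "\<dots> = (\<lambda>g. q (\<phi>1 g)) ` carrier G" using key by (rule image_cong[OF refl])
    also have "\<dots> = q ` (\<phi>1 ` carrier G)" by (simp add: image_image)
    finally show ?thesis using s1 sq by simp
  qed
  have kp2: "finite (kernel G2 (G1 Mod N) \<psi>2)"
  proof -
    have "kernel G2 (G1 Mod N) \<psi>2 \<subseteq> \<phi>2 ` {g \<in> carrier G. \<phi>1 g \<in> N}"
    proof
      fix y assume "y \<in> kernel G2 (G1 Mod N) \<psi>2"
      then have y: "y \<in> carrier G2" "\<psi>2 y = N" by (auto simp: kernel_def)
      then obtain g where g: "g \<in> carrier G" "y = \<phi>2 g" using car2 by auto
      then have "N #>\<^bsub>G1\<^esub> \<phi>1 g = N" using y key by (simp add: q_def)
      then have "\<phi>1 g \<in> N"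
        using group.coset_join1[OF F1(1) _ _ N1.subgroup_axioms] g group_hom.hom_closed[OF gh1] by blast
      then show "y \<in> \<phi>2 ` {g \<in> carrier G. \<phi>1 g \<in> N}" using g by blast
    qed
    moreover have "finite {g \<in> carrier G. \<phi>1 g \<in> N}" by (rule hom_fibre_finite[OF Gf(1) F1(1) h1 k1 fN])
    ultimately show ?thesis using finite_subset by blast
  qed
  have cp2: "continuous_map T2 S \<psi>2"
  proof -
    have qm: "quotient_map T T2 \<phi>2"
      by (rule continuous_imp_quotient_map[OF ct2 Gf(5) F2(6)]) (simp add: Gf(2) F2(2) s2)
    have "continuous_map T S (q \<circ> \<phi>1)" by (rule continuous_map_compose[OF ct1 ctq])
    then have "continuous_map T S (\<psi>2 \<circ> \<phi>2)" by (rule continuous_map_eq) (simp add: Gf(2) key)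
    then show ?thesis by (rule continuous_compose_quotient_map[OF qm])
  qed
  have fp2: "fk_epi G2 T2 (G1 Mod N) S \<psi>2" using hp2 sp2 kp2 cp2 by (simp add: fk_epi_def)
  have ip2: "\<forall>y\<in>carrier G2. a1 ` (\<psi>2 y) = \<psi>2 (a2 y)"
  proof
    fix y assume "y \<in> carrier G2"
    then obtain g where g: "g \<in> carrier G" "y = \<phi>2 g" using car2 by auto
    have ag: "\<alpha> g \<in> carrier G" using ha g by (auto simp: hom_def)
    have "a1 ` (\<psi>2 y) = q (a1 (\<phi>1 g))" using g key iq group_hom.hom_closed[OF gh1] by simp
    also have "\<dots> = q (\<phi>1 (\<alpha> g))" using i1 g by simp
    also have "\<dots> = \<psi>2 (\<phi>2 (\<alpha> g))" using key ag by simp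
    also have "\<dots> = \<psi>2 (a2 y)" using i2 g by simp
    finally show "a1 ` (\<psi>2 y) = \<psi>2 (a2 y)" .
  qed
  show ?thesis unfolding cocodom_via_def
    using cL fq fp2 iq ip2 by blast
qed

lemma cocomm_trans:
  fixes G1 :: "'a monoid" and G2 :: "'b monoid" and G3 :: "'e monoid"
  assumes c1: "cpair G1 T1 a1" and c2: "cpair G2 T2 a2" and c3: "cpair G3 T3 a3"
    and cc1: "cocomm_via TYPE('c) G1 T1 a1 G2 T2 a2"
    and cc2: "cocomm_via TYPE('d) G2 T2 a2 G3 T3 a3"
  shows "cocomm_via TYPE('c \<times> 'd) G1 T1 a1 G3 T3 a3"
proof -
  obtain G :: "'c monoid" and T \<alpha> \<phi>1 \<phi>2 where cG: "cpair G T \<alpha>"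
    and f1: "fk_epi G T G1 T1 \<phi>1" and f2: "fk_epi G T G2 T2 \<phi>2"
    and i1: "\<forall>x\<in>carrier G. \<phi>1 (\<alpha> x) = a1 (\<phi>1 x)"
    and i2: "\<forall>x\<in>carrier G. \<phi>2 (\<alpha> x) = a2 (\<phi>2 x)"
    using cc1 unfolding cocomm_via_def by blast
  obtain H :: "'d monoid" and S \<beta> \<psi>2 \<psi>3 where cH: "cpair H S \<beta>"
    and g2: "fk_epi H S G2 T2 \<psi>2" and g3: "fk_epi H S G3 T3 \<psi>3"
    and j2: "\<forall>x\<in>carrier H. \<psi>2 (\<beta> x) = a2 (\<psi>2 x)"
    and j3: "\<forall>x\<in>carrier H. \<psi>3 (\<beta> x) = a3 (\<psi>3 x)"
    using cc2 unfolding cocomm_via_def by blast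
  define P where "P = {z \<in> carrier G \<times> carrier H. \<phi>2 (fst z) = \<psi>2 (snd z)}"
  have FP: "cpair ((G \<times>\<times> H)\<lparr>carrier := P\<rparr>) (subtopology (prod_topology T S) P) (\<lambda>z. (\<alpha> (fst z), \<beta> (snd z)))
     \<and> fk_epi ((G \<times>\<times> H)\<lparr>carrier := P\<rparr>) (subtopology (prod_topology T S) P) G T fst
     \<and> fk_epi ((G \<times>\<times> H)\<lparr>carrier := P\<rparr>) (subtopology (prod_topology T S) P) H S snd"
    by (rule fiber_product[OF cG cH c2 f2 g2 i2 j2 P_def])
  define D where "D = (G \<times>\<times> H)\<lparr>carrier := P\<rparr>"
  define Yt where "Yt = subtopology (prod_topology T S) P"
  have cD: "cpair D Yt (\<lambda>z. (\<alpha> (fst z), \<beta> (snd z)))" and ff: "fk_epi D Yt G T fst"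
    and fs: "fk_epi D Yt H S snd" using FP by (auto simp: D_def Yt_def)
  have e1: "fk_epi D Yt G1 T1 (\<phi>1 \<circ> fst)"
    by (rule fk_epi_comp[OF cpairD(1)[OF cD] cpairD(1)[OF cG] cpairD(1)[OF c1] ff f1])
  have e3: "fk_epi D Yt G3 T3 (\<psi>3 \<circ> snd)"
    by (rule fk_epi_comp[OF cpairD(1)[OF cD] cpairD(1)[OF cH] cpairD(1)[OF c3] fs g3])
  have carD: "carrier D = P" by (simp add: D_def)
  have "\<forall>z\<in>carrier D. (\<phi>1 \<circ> fst) ((\<lambda>z. (\<alpha> (fst z), \<beta> (snd z))) z) = a1 ((\<phi>1 \<circ> fst) z)"
    using i1 by (auto simp: carD P_def)
  moreover have "\<forall>z\<in>carrier D. (\<psi>3 \<circ> snd) ((\<lambda>z. (\<alpha> (fst z), \<beta> (snd z))) z) = a3 ((\<psi>3 \<circ> snd) z)"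
    using j3 by (auto simp: carD P_def)
  ultimately show ?thesis unfolding cocomm_via_def using cD e1 e3 by blast
qed

lemma cocodom_to_cocomm:
  fixes G1 :: "'a monoid" and G2 :: "'b monoid"
  assumes c1: "cpair G1 T1 a1" and c2: "cpair G2 T2 a2"
    and cc: "cocodom_via TYPE('l) G1 T1 a1 G2 T2 a2"
  shows "cocomm_via TYPE('a \<times> 'b) G1 T1 a1 G2 T2 a2"
proof -
  obtain L :: "'l monoid" and S \<gamma> \<psi>1 \<psi>2 where cL: "cpair L S \<gamma>"
    and f1: "fk_epi G1 T1 L S \<psi>1" and f2: "fk_epi G2 T2 L S \<psi>2"
    and i1: "\<forall>x\<in>carrier G1. \<gamma> (\<psi>1 x) = \<psi>1 (a1 x)"
    and i2: "\<forall>x\<in>carrier G2. \<gamma> (\<psi>2 x) = \<psi>2 (a2 x)"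
    using cc unfolding cocodom_via_def by blast
  have i1': "\<forall>x\<in>carrier G1. \<psi>1 (a1 x) = \<gamma> (\<psi>1 x)" using i1 by simp
  have i2': "\<forall>x\<in>carrier G2. \<psi>2 (a2 x) = \<gamma> (\<psi>2 x)" using i2 by simp
  define P where "P = {z \<in> carrier G1 \<times> carrier G2. \<psi>1 (fst z) = \<psi>2 (snd z)}"
  have FP: "cpair ((G1 \<times>\<times> G2)\<lparr>carrier := P\<rparr>) (subtopology (prod_topology T1 T2) P) (\<lambda>z. (a1 (fst z), a2 (snd z)))
     \<and> fk_epi ((G1 \<times>\<times> G2)\<lparr>carrier := P\<rparr>) (subtopology (prod_topology T1 T2) P) G1 T1 fst
     \<and> fk_epi ((G1 \<times>\<times> G2)\<lparr>carrier := P\<rparr>) (subtopology (prod_topology T1 T2) P) G2 T2 snd"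
    by (rule fiber_product[OF c1 c2 cL f1 f2 i1' i2' P_def])
  then show ?thesis unfolding cocomm_via_def by fastforce
qed

theorem proposition6p15:
  fixes G1 :: "'a monoid" and T1 :: "'a topology" and a1 :: "'a \<Rightarrow> 'a"
    and G2 :: "'b monoid" and T2 :: "'b topology" and a2 :: "'b \<Rightarrow> 'b"
    and G3 :: "'e monoid" and T3 :: "'e topology" and a3 :: "'e \<Rightarrow> 'e"
  assumes "cpair G1 T1 a1" and "cpair G2 T2 a2" and "cpair G3 T3 a3"
  shows "cocomm_via TYPE('a) G1 T1 a1 G1 T1 a1
    \<and> (cocomm_via TYPE('c) G1 T1 a1 G2 T2 a2 \<longrightarrow> cocomm_via TYPE('c) G2 T2 a2 G1 T1 a1)
    \<and> (cocomm_via TYPE('c) G1 T1 a1 G2 T2 a2 \<and> cocomm_via TYPE('d) G2 T2 a2 G3 T3 a3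
           \<longrightarrow> cocomm_via TYPE('c \<times> 'd) G1 T1 a1 G3 T3 a3)
    \<and> (cocomm_via TYPE('c) G1 T1 a1 G2 T2 a2 \<longrightarrow> cocodom_via TYPE('a set) G1 T1 a1 G2 T2 a2)
    \<and> (cocodom_via TYPE('l) G1 T1 a1 G2 T2 a2 \<longrightarrow> cocomm_via TYPE('a \<times> 'b) G1 T1 a1 G2 T2 a2)"
proof (intro conjI impI)
  have fid: "fk_epi G1 T1 G1 T1 (\<lambda>x. x)"
    using assms(1) by (intro fk_epi_id) (simp add: cpair_def)
  show "cocomm_via TYPE('a) G1 T1 a1 G1 T1 a1"
    unfolding cocomm_via_def using assms(1) fid by blast
next
  assume "cocomm_via TYPE('c) G1 T1 a1 G2 T2 a2"
  then show "cocomm_via TYPE('c) G2 T2 a2 G1 T1 a1" unfolding cocomm_via_def by blast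
next
  assume "cocomm_via TYPE('c) G1 T1 a1 G2 T2 a2 \<and> cocomm_via TYPE('d) G2 T2 a2 G3 T3 a3"
  then show "cocomm_via TYPE('c \<times> 'd) G1 T1 a1 G3 T3 a3"
    using cocomm_trans[OF assms] by blast
next
  assume "cocomm_via TYPE('c) G1 T1 a1 G2 T2 a2"
  then show "cocodom_via TYPE('a set) G1 T1 a1 G2 T2 a2"
    by (rule cocomm_to_cocodom[OF assms(1,2)])
next
  assume "cocodom_via TYPE('l) G1 T1 a1 G2 T2 a2"
  then show "cocomm_via TYPE('a \<times> 'b) G1 T1 a1 G2 T2 a2"
    by (rule cocodom_to_cocomm[OF assms(1,2)])
qed

end
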